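(* Let $K$ be a field, $\nu$ a valuation on $K[x]$, and $\mathbf{Q}\subseteq K[x]$ a set of nonconstant monic polynomials with the following properties: (1) $\nu_Q$ is a valuation on $K[x]$ for every $Q\in\mathbf{Q}$; (2) for every finite nonempty subset $\mathcal{F}\subseteq\mathbf{Q}$ there exists $Q\in\mathcal{F}$ such that $\nu_Q(Q')=\nu(Q')$ for every $Q'\in\mathcal{F}$; (3) for every $p\in K[x]$ there exist $a_1,\ldots,a_r\in K$ and $\lambda_1,\ldots,\lambda_r\in\mathbb{N}^{\mathbf{Q}}$ such that $p=\sum_{i=1}^r a_i\mathbf{Q}^{\lambda_i}$ with $\nu(a_i\mathbf{Q}^{\lambda_i})\geq\nu(p)$ for every $i$, and $\deg(Q)\leq\deg(p)$ for every $Q\in\mathbf{Q}$ with $\lambda_i(Q)\neq 0$ for some $i$. Then $\mathbf{Q}$ is a complete set for $\nu$.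
   Context: A valuation on a commutative ring $R$ is a map $\nu:R\to\Gamma\cup\{\infty\}$, $\Gamma$ an ordered abelian group, with $\nu(ab)=\nu(a)+\nu(b)$, $\nu(a+b)\geq\min\{\nu(a),\nu(b)\}$, $\nu(1)=0$, $\nu(0)=\infty$ (nonzero elements may have value $\infty$). For a nonconstant monic $q\in K[x]$ and $f\in K[x]$, the $q$-expansion of $f$ is the unique expression $f=f_0+f_1q+\cdots+f_nq^n$ with each $f_i=0$ or $\deg(f_i)<\deg(q)$; the $q$-truncation of $\nu$ is $\nu_q(f):=\min_{0\leq i\leq n}\nu(f_iq^i)$. A set $\mathbf{Q}$ of nonconstant monic polynomials in $K[x]$ is a complete set for $\nu$ if for every nonconstant $p\in K[x]$ there exists $q\in\mathbf{Q}$ with $\deg(q)\leq\deg(p)$ and $\nu(p)=\nu_q(p)$. $\mathbb{N}^{\mathbf{Q}}$ denotes the set of maps $\lambda:\mathbf{Q}\to\mathbb{N}$ with $\lambda(q)=0$ for all but finitely many $q$, and $\mathbf{Q}^\lambda:=\prod_{q\in\mathbf{Q}}q^{\lambda(q)}$. *)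

theory Defs
  imports "HOL-Computational_Algebra.Polynomial"
begin

text \<open>Values in \<Gamma> \<union> {\<infinity>}: an element of type 'g option, where None represents \<infinity>
  and Some g represents g \<in> \<Gamma> (with \<Gamma> a linearly ordered abelian group).\<close>

fun vle :: "'g::linordered_ab_group_add option \<Rightarrow> 'g option \<Rightarrow> bool" where
  "vle _ None = True"
| "vle None (Some _) = False"
| "vle (Some a) (Some b) = (a \<le> b)"

fun vadd :: "'g::linordered_ab_group_add option \<Rightarrow> 'g option \<Rightarrow> 'g option" where
  "vadd (Some a) (Some b) = Some (a + b)"
| "vadd _ _ = None"

fun vmin :: "'g::linordered_ab_group_add option \<Rightarrow> 'g option \<Rightarrow> 'g option" where
  "vmin None y = y"
| "vmin x None = x"
| "vmin (Some a) (Some b) = Some (min a b)"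

definition is_valuation :: "('a::field poly \<Rightarrow> 'g::linordered_ab_group_add option) \<Rightarrow> bool" where
  "is_valuation v \<longleftrightarrow>
     (\<forall>a b. v (a * b) = vadd (v a) (v b)) \<and>
     (\<forall>a b. vle (vmin (v a) (v b)) (v (a + b))) \<and>
     v 1 = Some 0 \<and> v 0 = None"

text \<open>The i-th coefficient f_i of the q-expansion of f (for monic q).\<close>
definition qcoeff :: "'a::field poly \<Rightarrow> 'a poly \<Rightarrow> nat \<Rightarrow> 'a poly" where
  "qcoeff q f i = (f div q ^ i) mod q"

text \<open>q-truncation: minimum of v(f_i q^i) over the expansion (indices beyond the
  expansion length give f_i = 0, hence value \<infinity>, and do not affect the minimum).\<close>
definition truncation :: "('a::field poly \<Rightarrow> 'g::linordered_ab_group_add option) \<Rightarrow> 'a poly \<Rightarrow> 'a poly \<Rightarrow> 'g option" where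
  "truncation v q f = fold (\<lambda>i acc. vmin (v (qcoeff q f i * q ^ i)) acc) [0..<Suc (degree f)] None"

definition Qpow :: "('a::field poly \<Rightarrow> nat) \<Rightarrow> 'a poly" where
  "Qpow lam = (\<Prod>q\<in>{q. lam q \<noteq> 0}. q ^ lam q)"

definition complete_set :: "('a::field poly \<Rightarrow> 'g::linordered_ab_group_add option) \<Rightarrow> 'a poly set \<Rightarrow> bool" where
  "complete_set v Q \<longleftrightarrow>
     (\<forall>p. degree p > 0 \<longrightarrow> (\<exists>q\<in>Q. degree q \<le> degree p \<and> v p = truncation v q p))"

end

theory Submission
  imports Defs
begin

lemma vle_refl: "vle x x" by (cases x) auto
lemma vle_trans: "vle x y \<Longrightarrow> vle y z \<Longrightarrow> vle x z"
  by (cases x; cases y; cases z) auto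
lemma vle_antisym: "vle x y \<Longrightarrow> vle y x \<Longrightarrow> x = y"
  by (cases x; cases y) auto
lemma vle_vmin_iff: "vle c (vmin a b) \<longleftrightarrow> vle c a \<and> vle c b"
  by (cases a; cases b; cases c) auto
lemma vmin_mono: "vle a a' \<Longrightarrow> vle b b' \<Longrightarrow> vle (vmin a b) (vmin a' b')"
  by (cases a; cases b; cases a'; cases b') (auto simp: min_le_iff_disj)
lemma vmin_None: "vmin x None = x" by (cases x) auto

lemma fold_le:
  assumes val: "is_valuation v" and "vle acc (v z)"
  shows "vle (fold (\<lambda>i acc. vmin (v (h i)) acc) xs acc) (v (sum_list (map h xs) + z))"
  using assms(2)
proof (induction xs arbitrary: acc z)
  case Nil then show ?case by simp
next
  case (Cons x xs)
  have tri: "vle (vmin (v (h x)) (v z)) (v (h x + z))"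
    using val unfolding is_valuation_def by blast
  have "vle (vmin (v (h x)) acc) (v (h x + z))"
    by (rule vle_trans[OF vmin_mono[OF vle_refl Cons.prems] tri])
  from Cons.IH[OF this] show ?case by (simp add: algebra_simps)
qed

lemma expansion:
  fixes f q :: "'a::field poly"
  shows "f = (\<Sum>i<n. qcoeff q f i * q ^ i) + (f div q ^ n) * q ^ n"
proof (induction n)
  case 0 then show ?case by simp
next
  case (Suc n)
  have "f div q ^ n = (f div q ^ n div q) * q + (f div q ^ n) mod q"
    by simp
  also have "f div q ^ n div q = f div q ^ Suc n"
    by (simp only: power_Suc2 poly_div_mult_right)
  finally have e: "f div q ^ n = (f div q ^ Suc n) * q + qcoeff q f n"
    unfolding qcoeff_def .
  show ?case
    apply (subst Suc.IH)
    apply (subst e)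
    by (simp add: algebra_simps power_Suc2)
qed

lemma trunc_le:
  fixes q :: "'a::field poly"
  assumes val: "is_valuation v" and q: "degree q > 0"
  shows "vle (truncation v q f) (v f)"
proof -
  let ?n = "Suc (degree f)"
  have "degree (q ^ ?n) = ?n * degree q"
    using q by (intro degree_power_eq) auto
  also have "\<dots> > degree f"
  proof -
    have "?n * 1 \<le> ?n * degree q" using q by (intro mult_le_mono2) simp
    then show ?thesis by simp
  qed
  finally have "f div q ^ ?n = 0" by (intro div_poly_less)
  with expansion[where f=f and n="?n" and q=q] have fe: "f = (\<Sum>i<?n. qcoeff q f i * q ^ i)" by simp
  have v0: "v 0 = None" using val unfolding is_valuation_def by blast
  have "vle (truncation v q f) (v (sum_list (map (\<lambda>i. qcoeff q f i * q ^ i) [0..<?n]) + 0))"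
    unfolding truncation_def by (rule fold_le[OF val]) (simp add: v0)
  also have "sum_list (map (\<lambda>i. qcoeff q f i * q ^ i) [0..<?n]) + 0 = f"
    by (simp only: add_0_right sum_set_upt_conv_sum_list_nat[symmetric] set_upt atLeast0LessThan fe[symmetric])
  finally show ?thesis .
qed

lemma trunc_const:
  fixes q :: "'a::field poly"
  assumes q: "degree q > 0"
  shows "truncation v q [:c:] = v [:c:]"
  using q by (simp add: truncation_def qcoeff_def mod_poly_less vmin_None)

lemma val_sum_ge:
  fixes r :: nat
  assumes "is_valuation w" and "\<forall>i<r. vle c (w (t i))"
  shows "vle c (w (\<Sum>i<r. t i))"
  using assms(2)
proof (induction r)
  case 0 then show ?case using assms(1) by (simp add: is_valuation_def)
next
  case (Suc r)
  have "vle (vmin (w (\<Sum>i<r. t i)) (w (t r))) (w ((\<Sum>i<r. t i) + t r))"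
    using assms(1) unfolding is_valuation_def by blast
  moreover have "vle c (vmin (w (\<Sum>i<r. t i)) (w (t r)))"
    using Suc by (simp add: vle_vmin_iff)
  ultimately show ?case by (simp add: vle_trans)
qed

lemma val_pow_eq:
  assumes "is_valuation w1" "is_valuation w2" "w1 x = w2 x"
  shows "w1 (x ^ k) = w2 (x ^ k)"
  using assms by (induction k) (auto simp: is_valuation_def)

lemma val_prod_eq:
  assumes "is_valuation w1" "is_valuation w2" "finite S" "\<forall>x\<in>S. w1 x = w2 x"
  shows "w1 (\<Prod>x\<in>S. x ^ g x) = w2 (\<Prod>x\<in>S. x ^ g x)"
  using assms(3,4)
proof (induction S rule: finite_induct)
  case empty then show ?case using assms(1,2) by (simp add: is_valuation_def)
next
  case (insert x S)
  have m1: "\<And>a b. w1 (a * b) = vadd (w1 a) (w1 b)" and m2: "\<And>a b. w2 (a * b) = vadd (w2 a) (w2 b)"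
    using assms(1,2) unfolding is_valuation_def by blast+
  show ?case using insert val_pow_eq[OF assms(1,2), of x "g x"] by (simp add: m1 m2)
qed

lemma deg_sum_const:
  "degree (\<Sum>i<(r::nat). smult (a i) (1::'a::field poly)) = 0"
proof -
  have "(\<Sum>i<r. smult (a i) (1::'a poly)) = [:\<Sum>i<r. a i:]"
    by (induction r) auto
  then show ?thesis by simp
qed

theorem mainTheorem2:
  fixes v :: "'a::field poly \<Rightarrow> 'g::linordered_ab_group_add option"
    and Q :: "'a poly set"
  assumes val: "is_valuation v"
    and monic_nonconst: "\<forall>q\<in>Q. lead_coeff q = 1 \<and> degree q > 0"
    and h1: "\<forall>q\<in>Q. is_valuation (truncation v q)"
    and h2: "\<forall>F. finite F \<and> F \<noteq> {} \<and> F \<subseteq> Q \<longrightarrow>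
               (\<exists>q\<in>F. \<forall>q'\<in>F. truncation v q q' = v q')"
    and h3: "\<forall>p. \<exists>(r::nat) (a::nat \<Rightarrow> 'a) (lam::nat \<Rightarrow> 'a poly \<Rightarrow> nat).
               (\<forall>i<r. finite {q. lam i q \<noteq> 0} \<and> {q. lam i q \<noteq> 0} \<subseteq> Q) \<and>
               p = (\<Sum>i<r. smult (a i) (Qpow (lam i))) \<and>
               (\<forall>i<r. vle (v p) (v (smult (a i) (Qpow (lam i))))) \<and>
               (\<forall>q\<in>Q. (\<exists>i<r. lam i q \<noteq> 0) \<longrightarrow> degree q \<le> degree p)"
  shows "complete_set v Q"
  unfolding complete_set_def
proof (intro allI impI)
  fix p :: "'a poly"
  assume dp: "degree p > 0"
  from spec[OF h3, of p] obtain r :: nat and a :: "nat \<Rightarrow> 'a" and lam :: "nat \<Rightarrow> 'a poly \<Rightarrow> nat" where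
    fin: "\<forall>i<r. finite {q. lam i q \<noteq> 0} \<and> {q. lam i q \<noteq> 0} \<subseteq> Q"
    and pe: "p = (\<Sum>i<r. smult (a i) (Qpow (lam i)))"
    and pv: "\<forall>i<r. vle (v p) (v (smult (a i) (Qpow (lam i))))"
    and pd: "\<forall>q\<in>Q. (\<exists>i<r. lam i q \<noteq> 0) \<longrightarrow> degree q \<le> degree p"
    by blast
  define F where "F = (\<Union>i<r. {q. lam i q \<noteq> 0})"
  have Ffin: "finite F" using fin unfolding F_def by auto
  have FQ: "F \<subseteq> Q" using fin unfolding F_def by auto
  have Fne: "F \<noteq> {}"
  proof
    assume "F = {}"
    then have "\<forall>i<r. {q. lam i q \<noteq> 0} = {}" unfolding F_def by auto
    then have "\<forall>i<r. Qpow (lam i) = 1" unfolding Qpow_def by simp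
    then have "p = (\<Sum>i<r. smult (a i) 1)" using pe by simp
    with dp deg_sum_const[where r=r and a=a] show False by simp
  qed
  from h2 Ffin FQ Fne obtain q where qF: "q \<in> F" and qeq: "\<forall>q'\<in>F. truncation v q q' = v q'"
    by blast
  have qQ: "q \<in> Q" using qF FQ by blast
  have dq: "degree q > 0" using qQ monic_nonconst by blast
  have dqp: "degree q \<le> degree p" using pd qQ qF unfolding F_def by blast
  define w where "w = truncation v q"
  have wv: "is_valuation w" using h1 qQ unfolding w_def by blast
  have le1: "vle (w p) (v p)" unfolding w_def by (rule trunc_le[OF val dq])
  have termeq: "w (smult (a i) (Qpow (lam i))) = v (smult (a i) (Qpow (lam i)))" if "i < r" for i
  proof -
    have sm: "smult (a i) (Qpow (lam i)) = [:a i:] * Qpow (lam i)" by simp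
    have wm: "\<And>x y. w (x * y) = vadd (w x) (w y)" and vm: "\<And>x y. v (x * y) = vadd (v x) (v y)"
      using wv val unfolding is_valuation_def by blast+
    have "w (Qpow (lam i)) = v (Qpow (lam i))"
      unfolding Qpow_def
      by (rule val_prod_eq[OF wv val]) (use fin that qeq in \<open>auto simp: F_def w_def\<close>)
    moreover have "w [:a i:] = v [:a i:]" unfolding w_def by (rule trunc_const[OF dq])
    ultimately show ?thesis by (simp only: sm wm vm)
  qed
  have le2: "vle (v p) (w p)"
    apply (subst (2) pe)
    apply (rule val_sum_ge[OF wv])
    using pv termeq by simp
  show "\<exists>q\<in>Q. degree q \<le> degree p \<and> v p = truncation v q p"
    using qQ dqp vle_antisym[OF le2 le1] unfolding w_def by blast
qed

end
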